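(* Let $M$ be a commutative monoid (written multiplicatively), $n>1$ and $0\le p<q\le n$. The simplicial set $K(M,2)$ satisfies the Beck–Chevalley condition $\mathrm{BC}_{p,q}[n]$ if and only if: for any elements $a_{ijk}\in M$, indexed by $0\le i<j<k\le n$ with $\{p,q\}\not\subset\{i,j,k\}$, satisfying $a_{ikl}a_{ijk}=a_{ijl}a_{jkl}$ for all $0\le i<j<k<l\le n$ with $\{p,q\}\not\subset\{i,j,k,l\}$, there exist elements $x_{ipq}$ ($0\le i<p$), $y_{pjq}$ ($p<j<q$), $z_{pqk}$ ($q<k\le n$) of $M$ satisfying (1) $x_{ipq}a_{ijp}=a_{ijq}x_{jpq}$ for all $0\le i<j<p$; (2) $y_{pkq}a_{pjk}=y_{pjq}a_{jkq}$ for all $p<j<k<q$; (3) $a_{pkl}z_{pqk}=z_{pql}a_{qkl}$ for all $q<k<l\le n$; (4) $x_{ipq}y_{pjq}=a_{ijq}a_{ipj}$ for all $0\le i<p<j<q$; (5) $a_{iqk}x_{ipq}=a_{ipk}z_{pqk}$ for all $0\le i<p<q<k\le n$; (6) $z_{pqk}y_{pjq}=a_{pjk}a_{jqk}$ for all $p<j<q<k\le n$.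
   Context: For a commutative monoid $M$, $K(M,2)$ is the simplicial set whose $n$-simplices are families $(a_{ijk})_{0\le i<j<k\le n}$ of elements of $M$ with $a_{ikl}a_{ijk}=a_{ijl}a_{jkl}$ for all $0\le i<j<k<l\le n$; the $j$-th face map omits all entries involving index $j$ (and reindexes), and degeneracies repeat an index and insert the unit of $M$. The Beck–Chevalley condition $\mathrm{BC}_{p,q}[n]$ on a simplicial set $S$: for any $(n-1)$-simplices $c_p,c_q$ with $d_pc_q=d_{q-1}c_p$ there exists an $n$-simplex $x$ with $d_px=c_p$, $d_qx=c_q$. *)

theory Defs
  imports Main
begin

definition BC :: "(nat \<Rightarrow> 's set) \<Rightarrow> (nat \<Rightarrow> nat \<Rightarrow> 's \<Rightarrow> 's) \<Rightarrow> nat \<Rightarrow> nat \<Rightarrow> nat \<Rightarrow> bool" where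
  "BC S d p q n \<longleftrightarrow>
     (\<forall>cp \<in> S (n - 1). \<forall>cq \<in> S (n - 1).
        d (n - 1) p cq = d (n - 1) (q - 1) cp \<longrightarrow>
        (\<exists>x \<in> S n. d n p x = cp \<and> d n q x = cq))"

text \<open>n-simplices of K(M,2): families a_{ijk}, 0 <= i < j < k <= n, represented as
  functions that are the unit outside the index range (canonical representative).\<close>
definition K2_simplices :: "nat \<Rightarrow> (nat \<Rightarrow> nat \<Rightarrow> nat \<Rightarrow> 'a::comm_monoid_mult) set" where
  "K2_simplices n = {a.
     (\<forall>i j k. \<not> (i < j \<and> j < k \<and> k \<le> n) \<longrightarrow> a i j k = 1) \<and>
     (\<forall>i j k l. i < j \<and> j < k \<and> k < l \<and> l \<le> n \<longrightarrow> a i k l * a i j k = a i j l * a j k l)}"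

definition skip :: "nat \<Rightarrow> nat \<Rightarrow> nat" where
  "skip j m = (if m < j then m else m + 1)"

definition K2_face :: "nat \<Rightarrow> nat \<Rightarrow> (nat \<Rightarrow> nat \<Rightarrow> nat \<Rightarrow> 'a::comm_monoid_mult) \<Rightarrow> (nat \<Rightarrow> nat \<Rightarrow> nat \<Rightarrow> 'a)" where
  "K2_face n j a = (\<lambda>i k l. if i < k \<and> k < l \<and> l \<le> n - 1
                              then a (skip j i) (skip j k) (skip j l) else 1)"

end

theory Submission
  imports Defs
begin



definition unsk :: "nat \<Rightarrow> nat \<Rightarrow> nat" where
  "unsk j m = (if m < j then m else m - 1)"

lemma skip_less_iff[simp]: "skip j a < skip j b \<longleftrightarrow> a < b"
  by (auto simp: skip_def)
lemma skip_neq[simp]: "skip j a \<noteq> j"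
  by (auto simp: skip_def)
lemma skip_neq'[simp]: "j \<noteq> skip j a"
  by (auto simp: skip_def)
lemma skip_le_iff: "j \<le> n \<Longrightarrow> 1 \<le> n \<Longrightarrow> skip j a \<le> n \<longleftrightarrow> a \<le> n - 1"
  by (auto simp: skip_def)
lemma unsk_skip[simp]: "unsk j (skip j a) = a"
  by (auto simp: skip_def unsk_def)
lemma skip_unsk: "a \<noteq> j \<Longrightarrow> skip j (unsk j a) = a"
  by (auto simp: skip_def unsk_def)
lemma unsk_less: "a \<noteq> j \<Longrightarrow> b \<noteq> j \<Longrightarrow> a < b \<Longrightarrow> unsk j a < unsk j b"
  by (auto simp: unsk_def)
lemma unsk_le: "a \<noteq> j \<Longrightarrow> a \<le> n \<Longrightarrow> j \<le> n \<Longrightarrow> unsk j a \<le> n - 1"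
  by (auto simp: unsk_def)
lemma skip_comm: "p < q \<Longrightarrow> skip q (skip p m) = skip p (skip (q-1) m)"
  by (auto simp: skip_def)

definition mm :: "nat \<Rightarrow> nat \<Rightarrow> nat \<Rightarrow> nat" where
  "mm p q t = unsk (q-1) (unsk p t)"

lemma mm1: "p < q \<Longrightarrow> t \<noteq> p \<Longrightarrow> t \<noteq> q \<Longrightarrow> skip p (mm p q t) = unsk q t"
  by (auto simp: skip_def unsk_def mm_def)
lemma mm2: "p < q \<Longrightarrow> t \<noteq> p \<Longrightarrow> t \<noteq> q \<Longrightarrow> skip (q-1) (mm p q t) = unsk p t"
  by (auto simp: skip_def unsk_def mm_def)
lemma mm_less: "p < q \<Longrightarrow> s \<notin> {p,q} \<Longrightarrow> t \<notin> {p,q} \<Longrightarrow> s < t \<Longrightarrow> mm p q s < mm p q t"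
  by (auto simp: unsk_def mm_def)
lemma mm_le: "p < q \<Longrightarrow> q \<le> n \<Longrightarrow> t \<notin> {p,q} \<Longrightarrow> t \<le> n \<Longrightarrow> mm p q t \<le> n - 2"
  by (auto simp: unsk_def mm_def)

lemma face_val: "i < k \<Longrightarrow> k < l \<Longrightarrow> l \<le> n - 1 \<Longrightarrow> K2_face n j a i k l = a (skip j i) (skip j k) (skip j l)"
  by (simp add: K2_face_def)

lemma face_out: "\<not> (i < k \<and> k < l \<and> l \<le> n - 1) \<Longrightarrow> K2_face n j a i k l = 1"
  unfolding K2_face_def by auto

lemma face_in:
  fixes a :: "nat \<Rightarrow> nat \<Rightarrow> nat \<Rightarrow> 'a::comm_monoid_mult"
  assumes "j \<le> n" "1 \<le> n"
    "\<And>i k l m. i<k \<Longrightarrow> k<l \<Longrightarrow> l<m \<Longrightarrow> m\<le>n \<Longrightarrow> j\<notin>{i,k,l,m} \<Longrightarrow> a i l m * a i k l = a i k m * a k l m"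
  shows "K2_face n j a \<in> K2_simplices (n-1)"
  unfolding K2_simplices_def
proof (intro CollectI conjI allI impI)
  fix i k l assume "\<not> (i < k \<and> k < l \<and> l \<le> n - 1)"
  then show "K2_face n j a i k l = 1" by (auto simp: K2_face_def)
next
  fix i k l m assume h: "i < k \<and> k < l \<and> l < m \<and> m \<le> n - 1"
  then show "K2_face n j a i l m * K2_face n j a i k l = K2_face n j a i k m * K2_face n j a k l m"
    using assms(3)[of "skip j i" "skip j k" "skip j l" "skip j m"] skip_le_iff[OF assms(1,2), of m]
    by (simp add: face_val)
qed

lemma face_recover:
  fixes a x :: "nat \<Rightarrow> nat \<Rightarrow> nat \<Rightarrow> 'a::comm_monoid_mult"
  assumes "K2_face n j x = K2_face n j a" "j \<le> n"
    and "i < k" "k < l" "l \<le> n" "j \<notin> {i,k,l}"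
  shows "x i k l = a i k l"
proof -
  have "K2_face n j x (unsk j i) (unsk j k) (unsk j l) = K2_face n j a (unsk j i) (unsk j k) (unsk j l)"
    using assms(1) by simp
  moreover have "unsk j i < unsk j k" "unsk j k < unsk j l" "unsk j l \<le> n - 1"
    using assms unsk_le[of l j n] by (auto intro: unsk_less)
  ultimately show ?thesis using assms(2-) by (simp add: face_val skip_unsk)
qed

lemma fwd:
  fixes a :: "nat \<Rightarrow> nat \<Rightarrow> nat \<Rightarrow> 'a::comm_monoid_mult"
  assumes BC: "BC (K2_simplices :: nat \<Rightarrow> (nat \<Rightarrow> nat \<Rightarrow> nat \<Rightarrow> 'a::comm_monoid_mult) set) K2_face p q n"
    and n: "n > 1" "p < q" "q \<le> n"
    and coc: "\<forall>i j k l. i < j \<and> j < k \<and> k < l \<and> l \<le> n \<and> \<not> ({p, q} \<subseteq> {i, j, k, l}) \<longrightarrow>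
          a i k l * a i j k = a i j l * a j k l"
  shows "\<exists>x y z :: nat \<Rightarrow> 'a.
          (\<forall>i j. i < j \<and> j < p \<longrightarrow> x i * a i j p = a i j q * x j) \<and>
          (\<forall>j k. p < j \<and> j < k \<and> k < q \<longrightarrow> y k * a p j k = y j * a j k q) \<and>
          (\<forall>k l. q < k \<and> k < l \<and> l \<le> n \<longrightarrow> a p k l * z k = z l * a q k l) \<and>
          (\<forall>i j. i < p \<and> p < j \<and> j < q \<longrightarrow> x i * y j = a i j q * a i p j) \<and>
          (\<forall>i k. i < p \<and> q < k \<and> k \<le> n \<longrightarrow> a i q k * x i = a i p k * z k) \<and>
          (\<forall>j k. p < j \<and> j < q \<and> q < k \<and> k \<le> n \<longrightarrow> z k * y j = a p j k * a j q k)"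
proof -
  have cp: "K2_face n p a \<in> K2_simplices (n-1)"
    by (rule face_in) (use n coc in auto)
  have cq: "K2_face n q a \<in> K2_simplices (n-1)"
    by (rule face_in) (use n coc in auto)
  have comp: "K2_face (n-1) p (K2_face n q a) = K2_face (n-1) (q-1) (K2_face n p a)"
  proof (intro ext)
    fix i k l
    show "K2_face (n-1) p (K2_face n q a) i k l = K2_face (n-1) (q-1) (K2_face n p a) i k l"
    proof (cases "i < k \<and> k < l \<and> l \<le> n - 1 - 1")
      case True
      have b1: "skip p l \<le> n - 1" "skip (q-1) l \<le> n - 1"
        using True n by (auto simp: skip_def)
      show ?thesis using True b1 n by (simp add: face_val skip_comm)
    next
      case False
      then show ?thesis by (simp only: face_out[OF False])
    qed
  qed
  obtain x where x: "x \<in> K2_simplices n" "K2_face n p x = K2_face n p a" "K2_face n q x = K2_face n q a"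
    using BC cp cq comp unfolding BC_def by metis
  have xa: "x i j k = a i j k" if "i < j" "j < k" "k \<le> n" "p \<notin> {i,j,k} \<or> q \<notin> {i,j,k}" for i j k
    using that face_recover[OF x(2), of i j k] face_recover[OF x(3), of i j k] n by auto
  have xc: "x i k l * x i j k = x i j l * x j k l" if "i < j" "j < k" "k < l" "l \<le> n" for i j k l
    using x(1) that unfolding K2_simplices_def by blast
  show ?thesis
  proof (rule exI[of _ "\<lambda>i. x i p q"], rule exI[of _ "\<lambda>j. x p j q"], rule exI[of _ "\<lambda>k. x p q k"], intro conjI allI impI)
    fix i j assume h: "i < j \<and> j < p"
    then show "x i p q * a i j p = a i j q * x j p q"
      using xc[of i j p q] xa[of i j p] xa[of i j q] n by auto
  next
    fix j k assume h: "p < j \<and> j < k \<and> k < q"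
    then show "x p k q * a p j k = x p j q * a j k q"
      using xc[of p j k q] xa[of p j k] xa[of j k q] n by auto
  next
    fix k l assume h: "q < k \<and> k < l \<and> l \<le> n"
    then show "a p k l * x p q k = x p q l * a q k l"
      using xc[of p q k l] xa[of p k l] xa[of q k l] n by auto
  next
    fix i j assume h: "i < p \<and> p < j \<and> j < q"
    then show "x i p q * x p j q = a i j q * a i p j"
      using xc[of i p j q] xa[of i j q] xa[of i p j] n by (auto simp: mult.commute)
  next
    fix i k assume h: "i < p \<and> q < k \<and> k \<le> n"
    then show "a i q k * x i p q = a i p k * x p q k"
      using xc[of i p q k] xa[of i q k] xa[of i p k] n by auto
  next
    fix j k assume h: "p < j \<and> j < q \<and> q < k \<and> k \<le> n"
    then show "x p q k * x p j q = a p j k * a j q k"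
      using xc[of p j q k] xa[of p j k] xa[of j q k] n by auto
  qed
qed

lemma bwd:
  fixes n p q :: nat
  assumes n: "n > 1" "p < q" "q \<le> n"
  and H: "\<forall>a :: nat \<Rightarrow> nat \<Rightarrow> nat \<Rightarrow> 'a::comm_monoid_mult.
       (\<forall>i j k l. i < j \<and> j < k \<and> k < l \<and> l \<le> n \<and> \<not> ({p, q} \<subseteq> {i, j, k, l}) \<longrightarrow>
          a i k l * a i j k = a i j l * a j k l) \<longrightarrow>
       (\<exists>x y z :: nat \<Rightarrow> 'a.
          (\<forall>i j. i < j \<and> j < p \<longrightarrow> x i * a i j p = a i j q * x j) \<and>
          (\<forall>j k. p < j \<and> j < k \<and> k < q \<longrightarrow> y k * a p j k = y j * a j k q) \<and>
          (\<forall>k l. q < k \<and> k < l \<and> l \<le> n \<longrightarrow> a p k l * z k = z l * a q k l) \<and>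
          (\<forall>i j. i < p \<and> p < j \<and> j < q \<longrightarrow> x i * y j = a i j q * a i p j) \<and>
          (\<forall>i k. i < p \<and> q < k \<and> k \<le> n \<longrightarrow> a i q k * x i = a i p k * z k) \<and>
          (\<forall>j k. p < j \<and> j < q \<and> q < k \<and> k \<le> n \<longrightarrow> z k * y j = a p j k * a j q k))"
  shows "BC (K2_simplices :: nat \<Rightarrow> (nat \<Rightarrow> nat \<Rightarrow> nat \<Rightarrow> 'a) set) K2_face p q n"
  unfolding BC_def
proof (intro ballI impI)
  fix cp cq :: "nat \<Rightarrow> nat \<Rightarrow> nat \<Rightarrow> 'a"
  assume cp: "cp \<in> K2_simplices (n-1)" and cq: "cq \<in> K2_simplices (n-1)"
    and comp: "K2_face (n - 1) p cq = K2_face (n - 1) (q - 1) cp"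
  have cp1: "cp i j k = 1" if "\<not> (i < j \<and> j < k \<and> k \<le> n - 1)" for i j k
    using cp that unfolding K2_simplices_def by blast
  have cq1: "cq i j k = 1" if "\<not> (i < j \<and> j < k \<and> k \<le> n - 1)" for i j k
    using cq that unfolding K2_simplices_def by blast
  have cpc: "cp i k l * cp i j k = cp i j l * cp j k l" if "i < j" "j < k" "k < l" "l \<le> n - 1" for i j k l
    using cp that unfolding K2_simplices_def by blast
  have cqc: "cq i k l * cq i j k = cq i j l * cq j k l" if "i < j" "j < k" "k < l" "l \<le> n - 1" for i j k l
    using cq that unfolding K2_simplices_def by blast
  have compv: "cq (skip p i) (skip p k) (skip p l) = cp (skip (q-1) i) (skip (q-1) k) (skip (q-1) l)"
    if "i < k" "k < l" "l \<le> n - 2" for i k l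
  proof -
    have "K2_face (n - 1) p cq i k l = K2_face (n - 1) (q - 1) cp i k l" using comp by simp
    then show ?thesis using that by (simp add: face_val)
  qed
  define a where "a i j k = (if i < j \<and> j < k \<and> k \<le> n then
      (if p \<notin> {i,j,k} then cp (unsk p i) (unsk p j) (unsk p k)
       else if q \<notin> {i,j,k} then cq (unsk q i) (unsk q j) (unsk q k) else 1) else 1)" for i j k
  have ap: "a i j k = cp (unsk p i) (unsk p j) (unsk p k)"
    if "i < j" "j < k" "k \<le> n" "p \<notin> {i,j,k}" for i j k
    using that by (simp add: a_def)
  have aq: "a i j k = cq (unsk q i) (unsk q j) (unsk q k)"
    if "i < j" "j < k" "k \<le> n" "q \<notin> {i,j,k}" for i j k
  proof (cases "p \<in> {i,j,k}")
    case True then show ?thesis using that by (auto simp: a_def)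
  next
    case False
    have "cq (skip p (mm p q i)) (skip p (mm p q j)) (skip p (mm p q k))
        = cp (skip (q-1) (mm p q i)) (skip (q-1) (mm p q j)) (skip (q-1) (mm p q k))"
      using that False n by (intro compv mm_less mm_le) auto
    moreover have "skip (q-1) (mm p q t) = unsk p t" if "t \<in> {i,j,k}" for t
      using mm2[of p q t] that False \<open>q \<notin> {i,j,k}\<close> n by auto
    ultimately show ?thesis using that False n by (simp add: ap mm1)
  qed
  have a1: "a i j k = 1" if "\<not> (i < j \<and> j < k \<and> k \<le> n)" for i j k
    unfolding a_def using that by auto
  have acoc: "\<forall>i j k l. i < j \<and> j < k \<and> k < l \<and> l \<le> n \<and> \<not> ({p, q} \<subseteq> {i, j, k, l}) \<longrightarrow>
          a i k l * a i j k = a i j l * a j k l"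
  proof (intro allI impI)
    fix i j k l assume h: "i < j \<and> j < k \<and> k < l \<and> l \<le> n \<and> \<not> ({p, q} \<subseteq> {i, j, k, l})"
    show "a i k l * a i j k = a i j l * a j k l"
    proof (cases "p \<in> {i,j,k,l}")
      case False
      then show ?thesis using h n
        by (simp add: ap) (rule cpc; use unsk_less[of i p j] unsk_less[of j p k] unsk_less[of k p l] unsk_le[of l p n] in simp)
    next
      case True
      then have "q \<notin> {i,j,k,l}" using h by auto
      then show ?thesis using h n
        by (simp add: aq) (rule cqc; use unsk_less[of i q j] unsk_less[of j q k] unsk_less[of k q l] unsk_le[of l q n] in simp)
    qed
  qed
  obtain X Y Z where XYZ:
          "\<forall>i j. i < j \<and> j < p \<longrightarrow> X i * a i j p = a i j q * X j"
          "\<forall>j k. p < j \<and> j < k \<and> k < q \<longrightarrow> Y k * a p j k = Y j * a j k q"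
          "\<forall>k l. q < k \<and> k < l \<and> l \<le> n \<longrightarrow> a p k l * Z k = Z l * a q k l"
          "\<forall>i j. i < p \<and> p < j \<and> j < q \<longrightarrow> X i * Y j = a i j q * a i p j"
          "\<forall>i k. i < p \<and> q < k \<and> k \<le> n \<longrightarrow> a i q k * X i = a i p k * Z k"
          "\<forall>j k. p < j \<and> j < q \<and> q < k \<and> k \<le> n \<longrightarrow> Z k * Y j = a p j k * a j q k"
    using mp[OF spec[OF H, of a] acoc] by (elim exE conjE) blast
  define x where "x i j k = (if i < j \<and> j < k \<and> k \<le> n \<and> p \<in> {i,j,k} \<and> q \<in> {i,j,k} then
      (if j = p \<and> k = q then X i else if i = p \<and> k = q then Y j else if i = p \<and> j = q then Z k else 1)
      else a i j k)" for i j k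
  have xa: "x i j k = a i j k" if "p \<notin> {i,j,k} \<or> q \<notin> {i,j,k}" for i j k
    using that by (auto simp: x_def)
  have xS: "x \<in> K2_simplices n"
    unfolding K2_simplices_def
  proof (intro CollectI conjI allI impI)
    fix i j k assume "\<not> (i < j \<and> j < k \<and> k \<le> n)"
    then show "x i j k = 1" unfolding x_def using a1 by auto
  next
    fix i j k l assume h: "i < j \<and> j < k \<and> k < l \<and> l \<le> n"
    show "x i k l * x i j k = x i j l * x j k l"
    proof (cases "{p,q} \<subseteq> {i,j,k,l}")
      case False
      then have "x i k l = a i k l" "x i j k = a i j k" "x i j l = a i j l" "x j k l = a j k l"
        by (auto intro!: xa)
      then show ?thesis using acoc h False by simp
    next
      case True
      then consider "i = p" "j = q" | "i = p" "k = q" | "i = p" "l = q" | "j = p" "k = q"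
        | "j = p" "l = q" | "k = p" "l = q"
        using h n by auto
      then show ?thesis
      proof cases
        case 1 then show ?thesis using h n XYZ(3) by (simp add: x_def mult.commute)
      next
        case 2 then show ?thesis using h n XYZ(6) by (simp add: x_def mult.commute)
      next
        case 3 then show ?thesis using h n XYZ(2) by (simp add: x_def mult.commute)
      next
        case 4 then show ?thesis using h n XYZ(5) by (simp add: x_def mult.commute)
      next
        case 5 then show ?thesis using h n XYZ(4) by (simp add: x_def mult.commute)
      next
        case 6 then show ?thesis using h n XYZ(1) by (simp add: x_def mult.commute)
      qed
    qed
  qed
  have fp: "K2_face n p x = cp"
  proof (intro ext)
    fix i k l show "K2_face n p x i k l = cp i k l"
    proof (cases "i < k \<and> k < l \<and> l \<le> n - 1")
      case True
      then show ?thesis using n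
        by (simp add: face_val xa ap skip_le_iff)
    next
      case False then show ?thesis by (simp only: face_out[OF False] cp1[OF False])
    qed
  qed
  have fq: "K2_face n q x = cq"
  proof (intro ext)
    fix i k l show "K2_face n q x i k l = cq i k l"
    proof (cases "i < k \<and> k < l \<and> l \<le> n - 1")
      case True
      then show ?thesis using n
        by (simp add: face_val xa aq skip_le_iff)
    next
      case False then show ?thesis by (simp only: face_out[OF False] cq1[OF False])
    qed
  qed
  show "\<exists>x\<in>K2_simplices n. K2_face n p x = cp \<and> K2_face n q x = cq"
    using xS fp fq by blast
qed

theorem mainTheorem9:
  fixes n p q :: nat
  assumes "n > 1" and "p < q" and "q \<le> n"
  shows "BC (K2_simplices :: nat \<Rightarrow> (nat \<Rightarrow> nat \<Rightarrow> nat \<Rightarrow> 'a::comm_monoid_mult) set) K2_face p q n \<longleftrightarrow>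
    (\<forall>a :: nat \<Rightarrow> nat \<Rightarrow> nat \<Rightarrow> 'a.
       (\<forall>i j k l. i < j \<and> j < k \<and> k < l \<and> l \<le> n \<and> \<not> ({p, q} \<subseteq> {i, j, k, l}) \<longrightarrow>
          a i k l * a i j k = a i j l * a j k l) \<longrightarrow>
       (\<exists>x y z :: nat \<Rightarrow> 'a.
          (\<forall>i j. i < j \<and> j < p \<longrightarrow> x i * a i j p = a i j q * x j) \<and>
          (\<forall>j k. p < j \<and> j < k \<and> k < q \<longrightarrow> y k * a p j k = y j * a j k q) \<and>
          (\<forall>k l. q < k \<and> k < l \<and> l \<le> n \<longrightarrow> a p k l * z k = z l * a q k l) \<and>
          (\<forall>i j. i < p \<and> p < j \<and> j < q \<longrightarrow> x i * y j = a i j q * a i p j) \<and>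
          (\<forall>i k. i < p \<and> q < k \<and> k \<le> n \<longrightarrow> a i q k * x i = a i p k * z k) \<and>
          (\<forall>j k. p < j \<and> j < q \<and> q < k \<and> k \<le> n \<longrightarrow> z k * y j = a p j k * a j q k)))"
  apply (rule iffI)
   apply (intro allI impI)
   apply (rule fwd[of p q n]; (assumption | rule assms))
  apply (rule bwd[of n p q]; (assumption | rule assms))
  done

end
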